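(* Assume $n^{2/3}$ is an integer. Consider Algorithm ProxSVRG (described in the context) with $b=n^{2/3}$, $\eta=1/(3L)$, $m=\lfloor n^{1/3}\rfloor$, and $T$ a multiple of $m$. Then the output $x_a$ satisfies $$\mathbb E\big[\|\mathcal G_\eta(x_a)\|^2\big]\le \frac{18L\,(F(x^0)-F(x^* ))}{T},$$ where $x^*$ is an optimal solution of $\min_x F(x)$.
   Context: Setting: Let $n,d\ge 1$ be integers and $[n]=\{1,\dots,n\}$. Let $f_1,\dots,f_n:\mathbb R^d\to\mathbb R$ be differentiable (possibly nonconvex) functions, each $L$-smooth for some $L>0$, i.e. $\|\nabla f_i(x)-\nabla f_i(y)\|\le L\|x-y\|$ for all $x,y\in\mathbb R^d$ and $i\in[n]$. Let $f=\frac1n\sum_{i=1}^n f_i$. Let $h:\mathbb R^d\to\mathbb R\cup\{+\infty\}$ be proper, lower semicontinuous and convex, with closed domain. Let $F=f+h$, and let $x^*$ be a global minimizer of $F$ on $\mathbb R^d$ (assumed to exist). For $\eta>0$, $\mathrm{prox}_{\eta h}(x):=\arg\min_{y\in\mathbb R^d}\big(h(y)+\frac1{2\eta}\|y-x\|^2\big)$, and the gradient mapping is $\mathcal G_\eta(x):=\frac1\eta\big[x-\mathrm{prox}_{\eta h}(x-\eta\nabla f(x))\big]$. Algorithm ProxSVRG$(x^0,T,m,b,\eta)$: Given $x^0\in\mathbb R^d$, positive integers $T,m,b$ and $\eta>0$, let $S=\lceil T/m\rceil$ and set $\tilde x^0=x^0_m=x^0$. For $s=0,\dots,S-1$: set $x^{s+1}_0=x^s_m$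 and $g^{s+1}=\frac1n\sum_{i=1}^n\nabla f_i(\tilde x^s)$; for $t=0,\dots,m-1$: draw a multiset $I_t$ of $b$ indices, each drawn independently and uniformly at random from $[n]$ (with replacement, independently of all previous draws), set $v^{s+1}_t=\frac1b\sum_{i\in I_t}\big(\nabla f_i(x^{s+1}_t)-\nabla f_i(\tilde x^s)\big)+g^{s+1}$ and $x^{s+1}_{t+1}=\mathrm{prox}_{\eta h}(x^{s+1}_t-\eta v^{s+1}_t)$; after the inner loop set $\tilde x^{s+1}=x^{s+1}_m$. The output $x_a$ is chosen uniformly at random from $\{x^{s+1}_t: 0\le t\le m-1,\ 0\le s\le S-1\}$. Expectations are over all randomness of the algorithm. *)

theory Defs
  imports "HOL-Analysis.Analysis" "HOL-Probability.Probability"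
begin

text \<open>The extended-valued function h : R^d -> R \<union> {+\<infinity>} is represented by its
  effective domain D (a set) together with its finite values h on D; h is +\<infinity> off D.\<close>

definition lsc_ext :: "'a::topological_space set \<Rightarrow> ('a \<Rightarrow> real) \<Rightarrow> bool" where
  "lsc_ext D h \<longleftrightarrow> (\<forall>c::real. closed {x\<in>D. h x \<le> c})"

definition F_ext :: "'a set \<Rightarrow> ('a \<Rightarrow> real) \<Rightarrow> ('a \<Rightarrow> real) \<Rightarrow> 'a \<Rightarrow> ereal" where
  "F_ext D f h x = (if x \<in> D then ereal (f x + h x) else \<infinity>)"

definition prox :: "real \<Rightarrow> 'a::real_normed_vector set \<Rightarrow> ('a \<Rightarrow> real) \<Rightarrow> 'a \<Rightarrow> 'a" where
  "prox \<eta> D h x = (SOME y. y \<in> D \<and>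
      (\<forall>z\<in>D. h y + (norm (y - x))\<^sup>2 / (2 * \<eta>) \<le> h z + (norm (z - x))\<^sup>2 / (2 * \<eta>)))"

definition full_grad :: "nat \<Rightarrow> (nat \<Rightarrow> 'a \<Rightarrow> 'a::real_vector) \<Rightarrow> 'a \<Rightarrow> 'a" where
  "full_grad n gf x = (1 / real n) *\<^sub>R (\<Sum>i<n. gf i x)"

definition grad_map :: "real \<Rightarrow> 'a::real_normed_vector set \<Rightarrow> ('a \<Rightarrow> real) \<Rightarrow> nat \<Rightarrow>
    (nat \<Rightarrow> 'a \<Rightarrow> 'a) \<Rightarrow> 'a \<Rightarrow> 'a" where
  "grad_map \<eta> D h n gf x = (1 / \<eta>) *\<^sub>R (x - prox \<eta> D h (x - \<eta> *\<^sub>R full_grad n gf x))"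

text \<open>A multiset of b indices drawn independently and uniformly from {0..<n} with replacement:
  uniform distribution on the length-b lists over {0..<n}.\<close>
definition draw_indices :: "nat \<Rightarrow> nat \<Rightarrow> nat list pmf" where
  "draw_indices n b = pmf_of_set {I. set I \<subseteq> {..<n} \<and> length I = b}"

definition svrg_step :: "nat \<Rightarrow> nat \<Rightarrow> real \<Rightarrow> 'a::real_normed_vector set \<Rightarrow> ('a \<Rightarrow> real) \<Rightarrow>
    (nat \<Rightarrow> 'a \<Rightarrow> 'a) \<Rightarrow> 'a \<Rightarrow> 'a \<Rightarrow> 'a \<Rightarrow> 'a pmf" where
  "svrg_step n b \<eta> D h gf xt g x =
     map_pmf (\<lambda>I. let v = (1 / real b) *\<^sub>R (\<Sum>i\<leftarrow>I. gf i x - gf i xt) + g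
                  in prox \<eta> D h (x - \<eta> *\<^sub>R v)) (draw_indices n b)"

fun svrg_inner :: "nat \<Rightarrow> nat \<Rightarrow> real \<Rightarrow> 'a::real_normed_vector set \<Rightarrow> ('a \<Rightarrow> real) \<Rightarrow>
    (nat \<Rightarrow> 'a \<Rightarrow> 'a) \<Rightarrow> 'a \<Rightarrow> 'a \<Rightarrow> nat \<Rightarrow> 'a \<Rightarrow> 'a list pmf" where
  "svrg_inner n b \<eta> D h gf xt g 0 x = return_pmf [x]"
| "svrg_inner n b \<eta> D h gf xt g (Suc k) x =
     bind_pmf (svrg_step n b \<eta> D h gf xt g x) (\<lambda>y.
     map_pmf (\<lambda>ys. x # ys) (svrg_inner n b \<eta> D h gf xt g k y))"

text \<open>Outer loop: S epochs of m inner steps starting from snapshot x (= x^s_m = x^{s+1}_0).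
  Returns the list of all x^{s+1}_t with 0 \<le> t \<le> m-1, epoch by epoch.\<close>
fun svrg_outer :: "nat \<Rightarrow> nat \<Rightarrow> real \<Rightarrow> 'a::real_normed_vector set \<Rightarrow> ('a \<Rightarrow> real) \<Rightarrow>
    (nat \<Rightarrow> 'a \<Rightarrow> 'a) \<Rightarrow> nat \<Rightarrow> nat \<Rightarrow> 'a \<Rightarrow> 'a list pmf" where
  "svrg_outer n b \<eta> D h gf m 0 x = return_pmf []"
| "svrg_outer n b \<eta> D h gf m (Suc S) x =
     bind_pmf (svrg_inner n b \<eta> D h gf x (full_grad n gf x) m x) (\<lambda>xs.
     map_pmf (\<lambda>rest. butlast xs @ rest) (svrg_outer n b \<eta> D h gf m S (last xs)))"

definition prox_svrg :: "nat \<Rightarrow> 'a::real_normed_vector set \<Rightarrow> ('a \<Rightarrow> real) \<Rightarrow>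
    (nat \<Rightarrow> 'a \<Rightarrow> 'a) \<Rightarrow> 'a \<Rightarrow> nat \<Rightarrow> nat \<Rightarrow> nat \<Rightarrow> real \<Rightarrow> 'a pmf" where
  "prox_svrg n D h gf x0 T m b \<eta> =
     (let S = nat \<lceil>real T / real m\<rceil> in
      bind_pmf (svrg_outer n b \<eta> D h gf m S x0) (\<lambda>xs.
      map_pmf (\<lambda>j. xs ! j) (pmf_of_set {..<S * m})))"

end

theory Submission
  imports Defs
begin


lemma lsc_attains_min:
  fixes \<phi> :: "'a::metric_space \<Rightarrow> real"
  assumes K: "compact K" "K \<noteq> {}" and cl: "\<And>c. closed {x\<in>K. \<phi> x \<le> c}"
  shows "\<exists>y\<in>K. \<forall>z\<in>K. \<phi> y \<le> \<phi> z"
proof -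
  have bdd: "bdd_below (\<phi> ` K)"
  proof (rule ccontr)
    assume nb: "\<not> bdd_below (\<phi> ` K)"
    have ex: "\<exists>x\<in>K. \<phi> x \<le> c" for c
    proof (rule ccontr)
      assume "\<not> (\<exists>x\<in>K. \<phi> x \<le> c)"
      then have "\<forall>x\<in>K. c \<le> \<phi> x" by auto
      then show False using nb by (auto simp: bdd_below_def)
    qed
    have "K \<inter> (\<Inter>k\<in>(UNIV::nat set). {x\<in>K. \<phi> x \<le> - real k}) \<noteq> {}"
    proof (rule compact_imp_fip_image[OF K(1)])
      show "closed {x\<in>K. \<phi> x \<le> - real i}" for i using cl by blast
      fix I' :: "nat set" assume "finite I'"
      obtain x where "x \<in> K" "\<phi> x \<le> - real (Max (insert 0 I'))" using ex by blast
      moreover have "\<And>k. k \<in> I' \<Longrightarrow> k \<le> Max (insert 0 I')" using \<open>finite I'\<close> by simp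
      ultimately have "x \<in> K \<inter> (\<Inter>i\<in>I'. {x\<in>K. \<phi> x \<le> - real i})"
        by (auto) (smt (verit, best) of_nat_le_iff)
      then show "K \<inter> (\<Inter>i\<in>I'. {x\<in>K. \<phi> x \<le> - real i}) \<noteq> {}" by blast
    qed
    then obtain x where "\<And>k::nat. \<phi> x \<le> - real k" by blast
    moreover obtain k::nat where "- \<phi> x < real k" using reals_Archimedean2 by blast
    ultimately show False by (smt (verit))
  qed
  define \<mu> where "\<mu> = Inf (\<phi> ` K)"
  have low: "\<mu> \<le> \<phi> z" if "z \<in> K" for z unfolding \<mu>_def using bdd that by (simp add: cInf_lower)
  have near: "\<exists>x\<in>K. \<phi> x < \<mu> + e" if "e > 0" for e
  proof -
    have "Inf (\<phi> ` K) < \<mu> + e" using that \<mu>_def by simp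
    then show ?thesis using K(2) bdd by (subst (asm) cInf_less_iff) auto
  qed
  have "K \<inter> (\<Inter>k\<in>(UNIV::nat set). {x\<in>K. \<phi> x \<le> \<mu> + 1 / (real k + 1)}) \<noteq> {}"
  proof (rule compact_imp_fip_image[OF K(1)])
    show "closed {x\<in>K. \<phi> x \<le> \<mu> + 1 / (real i + 1)}" for i using cl by blast
    fix I' :: "nat set" assume fI: "finite I'"
    define M where "M = Max (insert 0 I')"
    obtain x where x: "x \<in> K" "\<phi> x < \<mu> + 1 / (real M + 1)" using near[of "1 / (real M + 1)"] by auto
    have "\<phi> x \<le> \<mu> + 1 / (real i + 1)" if "i \<in> I'" for i
    proof -
      have "i \<le> M" using fI that M_def by simp
      then have "1 / (real M + 1) \<le> 1 / (real i + 1)" by (simp add: frac_le)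
      then show ?thesis using x by simp
    qed
    then have "x \<in> K \<inter> (\<Inter>i\<in>I'. {x\<in>K. \<phi> x \<le> \<mu> + 1 / (real i + 1)})" using x by auto
    then show "K \<inter> (\<Inter>i\<in>I'. {x\<in>K. \<phi> x \<le> \<mu> + 1 / (real i + 1)}) \<noteq> {}" by blast
  qed
  then obtain y where y: "y \<in> K" "\<And>k::nat. \<phi> y \<le> \<mu> + 1 / (real k + 1)" by blast
  have "\<phi> y \<le> \<mu>"
  proof (rule field_le_epsilon)
    fix e :: real assume "e > 0"
    then obtain k where "inverse (real (Suc k)) < e" using reals_Archimedean by blast
    moreover have "inverse (real (Suc k)) = 1 / (real k + 1)" by (simp add: field_simps)
    ultimately show "\<phi> y \<le> \<mu> + e" using y(2)[of k] by linarith
  qed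
  then show ?thesis using y(1) low by force
qed



lemma sublevel_closed_plus:
  fixes h q :: "'a::metric_space \<Rightarrow> real"
  assumes lsc: "lsc_ext D h" and q: "continuous_on UNIV q" and K: "closed K" "K \<subseteq> D"
  shows "closed {x\<in>K. h x + q x \<le> c}"
  unfolding closed_sequential_limits
proof (intro allI impI, elim conjE)
  fix s l assume s: "\<forall>n. s n \<in> {x \<in> K. h x + q x \<le> c}" and lim: "s \<longlonglongrightarrow> l"
  have lK: "l \<in> K" using K(1) s lim closed_sequentially by blast
  have "h l \<le> (c - q l) + e" if e: "e > 0" for e
  proof -
    have "(\<lambda>n. q (s n)) \<longlonglongrightarrow> q l"
    proof -
      have "isCont q l" using q by (simp add: continuous_on_eq_continuous_at)
      then show ?thesis using lim by (rule isCont_tendsto_compose)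
    qed
    then have ev: "eventually (\<lambda>n. dist (q (s n)) (q l) < e) sequentially" using e tendstoD by blast
    have ev2: "eventually (\<lambda>n. s n \<in> {x\<in>D. h x \<le> c - q l + e}) sequentially"
    proof (rule eventually_mono[OF ev])
      fix n assume "dist (q (s n)) (q l) < e"
      then have "q (s n) > q l - e" by (simp add: dist_real_def abs_less_iff)
      moreover have "h (s n) + q (s n) \<le> c" "s n \<in> D" using s K(2) by auto
      ultimately show "s n \<in> {x\<in>D. h x \<le> c - q l + e}" by auto
    qed
    have cl: "closed {x\<in>D. h x \<le> c - q l + e}" using lsc unfolding lsc_ext_def by blast
    have "l \<in> {x\<in>D. h x \<le> c - q l + e}"
      by (rule Lim_in_closed_set[OF cl ev2 sequentially_bot lim])
    then show ?thesis by simp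
  qed
  then have "h l \<le> c - q l" by (rule field_le_epsilon)
  then show "l \<in> {x \<in> K. h x + q x \<le> c}" using lK by simp
qed

lemma h_lower_bound:
  fixes h :: "'a::euclidean_space \<Rightarrow> real"
  assumes D: "closed D" "convex D" "y0 \<in> D" and hc: "convex_on D h" and lsc: "lsc_ext D h"
  shows "\<exists>M \<beta>. \<beta> \<ge> 0 \<and> (\<forall>y\<in>D. h y \<ge> M - \<beta> * norm (y - y0))"
proof -
  define K where "K = D \<inter> cball y0 1"
  have cK: "compact K" unfolding K_def using D(1) by (intro closed_Int_compact) auto
  have Kne: "K \<noteq> {}" using D(3) K_def by auto
  have "closed {x\<in>K. h x + (\<lambda>_. 0) x \<le> c}" for c
    by (rule sublevel_closed_plus[OF lsc]) (auto simp: K_def intro: closed_Int D(1))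
  then obtain y1 where y1: "y1 \<in> K" "\<forall>z\<in>K. h y1 \<le> h z"
    using lsc_attains_min[OF cK Kne, of h] by auto
  define M where "M = h y1"
  define \<beta> where "\<beta> = h y0 - M"
  have hy0: "h y0 \<ge> M" using y1 D(3) K_def M_def by auto
  then have b0: "\<beta> \<ge> 0" by (simp add: \<beta>_def)
  have "h y \<ge> M - \<beta> * norm (y - y0)" if y: "y \<in> D" for y
  proof (cases "norm (y - y0) \<le> 1")
    case True
    then have "y \<in> K" using y by (auto simp: K_def dist_norm norm_minus_commute)
    then have "h y \<ge> M" using y1 M_def by auto
    moreover have "\<beta> * norm (y - y0) \<ge> 0" using b0 by simp
    ultimately show ?thesis by linarith
  next
    case False
    define r where "r = norm (y - y0)"
    have r1: "r > 1" using False r_def by simp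
    define z where "z = (1 - 1/r) *\<^sub>R y0 + (1/r) *\<^sub>R y"
    have zD: "z \<in> D" unfolding z_def using D(2) D(3) y r1
      by (intro convexD) auto
    have "z - y0 = (1/r) *\<^sub>R (y - y0)" by (simp add: z_def algebra_simps)
    moreover have "y \<noteq> y0" using r1 r_def by auto
    ultimately have "norm (z - y0) = 1" using r1 r_def by (simp add: norm_minus_commute)
    then have "z \<in> K" using zD by (simp add: K_def dist_norm norm_minus_commute)
    then have hz: "h z \<ge> M" using y1 M_def by auto
    have "h z \<le> (1 - 1/r) * h y0 + (1/r) * h y"
      unfolding z_def using convex_onD[OF hc, of "1/r" y0 y] r1 D(3) y by auto
    then have "M \<le> (1 - 1/r) * h y0 + (1/r) * h y" using hz by linarith
    then have "r * M \<le> r * ((1 - 1/r) * h y0 + (1/r) * h y)" using r1 by simp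
    also have "\<dots> = (r - 1) * h y0 + h y" using r1 by (simp add: algebra_simps)
    finally have "h y \<ge> r * M - (r - 1) * h y0" by linarith
    then show ?thesis unfolding \<beta>_def r_def[symmetric] using hy0 by (simp add: algebra_simps)
  qed
  then show ?thesis using b0 by blast
qed



lemma prox_exists:
  fixes D :: "'a::euclidean_space set" and h :: "'a \<Rightarrow> real"
  assumes D: "closed D" "convex D" "D \<noteq> {}" and hc: "convex_on D h" and lsc: "lsc_ext D h"
    and eta: "\<eta> > 0"
  shows "\<exists>y. y \<in> D \<and> (\<forall>z\<in>D. h y + (norm (y - w))\<^sup>2 / (2 * \<eta>) \<le> h z + (norm (z - w))\<^sup>2 / (2 * \<eta>))"
proof -
  obtain y0 where y0: "y0 \<in> D" using D(3) by blast
  obtain M \<beta> where b0: "\<beta> \<ge> 0" and hb: "\<And>y. y \<in> D \<Longrightarrow> h y \<ge> M - \<beta> * norm (y - y0)"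
    using h_lower_bound[OF D(1,2) y0 hc lsc] by blast
  define \<phi> where "\<phi> z = h z + (norm (z - w))\<^sup>2 / (2 * \<eta>)" for z
  define a where "a = norm (y0 - w)"
  define R where "R = a + 2 * \<eta> * (\<beta> + 1) + \<bar>\<phi> y0 - M\<bar> + \<beta> * a + 1"
  have far: "\<phi> z > \<phi> y0" if z: "z \<in> D" "norm (z - y0) > R" for z
  proof -
    define r where "r = norm (z - y0)"
    have a0: "a \<ge> 0" by (simp add: a_def)
    have ba: "\<beta> * a \<ge> 0" using b0 a0 by simp
    have rR: "r > R" using z r_def by simp
    have tri: "norm (z - w) \<ge> r - a"
      unfolding r_def a_def using norm_triangle_ineq4[of "z - w" "y0 - w"] by simp
    have ra: "r - a \<ge> 2 * \<eta> * (\<beta> + 1)" using rR R_def ba by (smt (verit) abs_ge_zero)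
    have pos: "0 \<le> 2 * \<eta> * (\<beta> + 1)" using eta b0 by simp
    have "(norm (z - w))\<^sup>2 \<ge> (r - a)\<^sup>2" using tri pos ra by (intro power_mono) auto
    also have "(r - a)\<^sup>2 \<ge> (r - a) * (2 * \<eta> * (\<beta> + 1))"
      unfolding power2_eq_square using ra pos by (intro mult_left_mono) auto
    finally have "(norm (z - w))\<^sup>2 / (2 * \<eta>) \<ge> (r - a) * (2 * \<eta> * (\<beta> + 1)) / (2 * \<eta>)"
      using eta by (intro divide_right_mono) auto
    also have "(r - a) * (2 * \<eta> * (\<beta> + 1)) / (2 * \<eta>) = (r - a) * (\<beta> + 1)" using eta by simp
    finally have q: "(norm (z - w))\<^sup>2 / (2 * \<eta>) \<ge> (r - a) * (\<beta> + 1)" .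
    have "\<phi> z \<ge> M - \<beta> * r + (r - a) * (\<beta> + 1)" unfolding \<phi>_def using hb[OF z(1), folded r_def] q by linarith
    also have "M - \<beta> * r + (r - a) * (\<beta> + 1) = M - \<beta> * a + r - a" by (simp add: algebra_simps)
    finally show ?thesis using rR R_def eta b0 by (smt (verit) abs_ge_self mult_nonneg_nonneg)
  qed
  define K where "K = D \<inter> cball y0 R"
  have cK: "compact K" unfolding K_def using D(1) by (intro closed_Int_compact) auto
  have R0: "R \<ge> 0" unfolding R_def using eta b0 by (simp add: a_def)
  have Kne: "K \<noteq> {}" using y0 R0 K_def by auto
  have cont: "continuous_on UNIV (\<lambda>z. (norm (z - w))\<^sup>2 / (2 * \<eta>))" using eta by (intro continuous_intros) auto
  have "closed {x\<in>K. h x + (norm (x - w))\<^sup>2 / (2 * \<eta>) \<le> c}" for c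
    by (rule sublevel_closed_plus[OF lsc cont]) (auto simp: K_def intro: closed_Int D(1))
  then have "closed {x\<in>K. \<phi> x \<le> c}" for c unfolding \<phi>_def .
  then obtain y where y: "y \<in> K" "\<forall>z\<in>K. \<phi> y \<le> \<phi> z" using lsc_attains_min[OF cK Kne, of \<phi>] by blast
  have "y0 \<in> K" using y0 R0 K_def by auto
  then have yy0: "\<phi> y \<le> \<phi> y0" using y by blast
  have "\<phi> y \<le> \<phi> z" if "z \<in> D" for z
  proof (cases "z \<in> K")
    case True then show ?thesis using y by blast
  next
    case False
    then have "norm (z - y0) > R" using that by (auto simp: K_def dist_norm norm_minus_commute)
    then show ?thesis using far[OF that] yy0 by linarith
  qed
  then show ?thesis using y(1) K_def unfolding \<phi>_def by blast
qed

lemma prox_spec: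
  fixes D :: "'a::euclidean_space set" and h :: "'a \<Rightarrow> real"
  assumes D: "closed D" "convex D" "D \<noteq> {}" and hc: "convex_on D h" and lsc: "lsc_ext D h"
    and eta: "\<eta> > 0"
  shows "prox \<eta> D h w \<in> D"
    "\<And>z. z \<in> D \<Longrightarrow> h (prox \<eta> D h w) + (norm (prox \<eta> D h w - w))\<^sup>2 / (2 * \<eta>) \<le> h z + (norm (z - w))\<^sup>2 / (2 * \<eta>)"
  using someI_ex[OF prox_exists[OF assms, of w]] unfolding prox_def by blast+



lemma aux_frac: "(\<eta>::real) > 0 \<Longrightarrow> (2 * t * I + t\<^sup>2 * N) / (2 * \<eta>) = t * (I / \<eta> + t * (N / (2 * \<eta>)))"
  by (simp add: field_simps power2_eq_square)


lemma nsq_add: "(norm (a + b))\<^sup>2 = (norm a)\<^sup>2 + 2 * (a \<bullet> b) + (norm (b::'a::real_inner))\<^sup>2"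
  by (simp add: power2_norm_eq_inner inner_add inner_commute algebra_simps)

lemma nsq_diff: "(norm (a - b))\<^sup>2 = (norm a)\<^sup>2 - 2 * (a \<bullet> b) + (norm (b::'a::real_inner))\<^sup>2"
  by (simp add: power2_norm_eq_inner inner_diff inner_commute algebra_simps)

lemma three_point:
  fixes y z w :: "'a::real_inner"
  assumes hc: "convex_on D h" and D: "convex D" and y: "y \<in> D" and z: "z \<in> D" and eta: "\<eta> > 0"
    and mn: "\<And>u. u \<in> D \<Longrightarrow> h y + (norm (y - w))\<^sup>2 / (2 * \<eta>) \<le> h u + (norm (u - w))\<^sup>2 / (2 * \<eta>)"
  shows "h y + (norm (y - w))\<^sup>2 / (2 * \<eta>) + (norm (y - z))\<^sup>2 / (2 * \<eta>) \<le> h z + (norm (z - w))\<^sup>2 / (2 * \<eta>)"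
proof -
  define A where "A = h y - h z - ((y - w) \<bullet> (z - y)) / \<eta>"
  define C where "C = (norm (z - y))\<^sup>2 / (2 * \<eta>)"
  have C0: "C \<ge> 0" using eta by (simp add: C_def)
  have key: "A \<le> t * C" if t: "0 < t" "t \<le> 1" for t
  proof -
    define u where "u = (1 - t) *\<^sub>R y + t *\<^sub>R z"
    have uD: "u \<in> D" unfolding u_def using D y z t by (intro convexD) auto
    have hu: "h u \<le> (1 - t) * h y + t * h z" unfolding u_def using convex_onD[OF hc, of t y z] t y z by auto
    have e: "u - w = (y - w) + t *\<^sub>R (z - y)" by (simp add: u_def algebra_simps)
    have nu: "(norm (u - w))\<^sup>2 = (norm (y - w))\<^sup>2 + 2 * t * ((y - w) \<bullet> (z - y)) + t\<^sup>2 * (norm (z - y))\<^sup>2"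
      unfolding e nsq_add by (simp add: power_mult_distrib)
    have "h y + (norm (y - w))\<^sup>2 / (2 * \<eta>) \<le> (1 - t) * h y + t * h z + (norm (u - w))\<^sup>2 / (2 * \<eta>)"
      using mn[OF uD] hu by linarith
    moreover have "(norm (u - w))\<^sup>2 / (2 * \<eta>) = (norm (y - w))\<^sup>2 / (2 * \<eta>) + (2 * t * ((y - w) \<bullet> (z - y)) + t\<^sup>2 * (norm (z - y))\<^sup>2) / (2 * \<eta>)"
      unfolding nu by (simp add: add_divide_distrib)
    moreover have "(1 - t) * h y = h y - t * h y" "t * (h y - h z) = t * h y - t * h z"
      by (simp_all add: algebra_simps)
    ultimately have "t * (h y - h z) \<le> (2 * t * ((y - w) \<bullet> (z - y)) + t\<^sup>2 * (norm (z - y))\<^sup>2) / (2 * \<eta>)"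
      by linarith
    also have "\<dots> = t * (((y - w) \<bullet> (z - y)) / \<eta> + t * C)"
      unfolding C_def by (rule aux_frac[OF eta])
    finally have "h y - h z \<le> ((y - w) \<bullet> (z - y)) / \<eta> + t * C" using t by simp
    then show ?thesis unfolding A_def by simp
  qed
  have A0: "A \<le> 0"
  proof (rule ccontr)
    assume "\<not> A \<le> 0"
    then have Ap: "A > 0" by simp
    define t where "t = A / (A + C + 1)"
    have t0: "0 < t" "t \<le> 1" using Ap C0 by (auto simp: t_def)
    have "t * C < A"
    proof -
      have "t * C = A * (C / (A + C + 1))" by (simp add: t_def)
      also have "C / (A + C + 1) < 1" using Ap C0 by simp
      then have "A * (C / (A + C + 1)) < A * 1" using Ap by (intro mult_strict_left_mono) auto
      finally show ?thesis by simp
    qed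
    then show False using key[OF t0] by simp
  qed
  have "z - w = (z - y) + (y - w)" by simp
  then have nz: "(norm (z - w))\<^sup>2 = (norm (z - y))\<^sup>2 + 2 * ((z - y) \<bullet> (y - w)) + (norm (y - w))\<^sup>2"
    by (metis nsq_add)
  have "(norm (y - z))\<^sup>2 / (2 * \<eta>) = (norm (z - y))\<^sup>2 / (2 * \<eta>)" by (simp add: norm_minus_commute)
  moreover have "(norm (z - w))\<^sup>2 / (2 * \<eta>) = (norm (z - y))\<^sup>2 / (2 * \<eta>) + ((y - w) \<bullet> (z - y)) / \<eta> + (norm (y - w))\<^sup>2 / (2 * \<eta>)"
    unfolding nz using eta by (simp add: inner_commute add_divide_distrib)
  ultimately show ?thesis using A0 unfolding A_def by linarith
qed

lemma descent:
  fixes g :: "'a::real_inner \<Rightarrow> real" and G :: "'a \<Rightarrow> 'a"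
  assumes der: "\<And>x. (g has_derivative (\<lambda>v. G x \<bullet> v)) (at x)"
    and lip: "\<And>x y. norm (G x - G y) \<le> L * norm (x - y)"
  shows "g y \<le> g x + G x \<bullet> (y - x) + L / 2 * (norm (y - x))\<^sup>2"
proof -
  define d where "d = y - x"
  define \<psi> where "\<psi> t = g (x + t *\<^sub>R d) - t * (G x \<bullet> d) - L / 2 * t\<^sup>2 * (norm d)\<^sup>2" for t :: real
  have dl: "DERIV \<psi> t :> (G (x + t *\<^sub>R d) \<bullet> d - G x \<bullet> d - L * t * (norm d)\<^sup>2)" for t
  proof -
    have l: "((\<lambda>t. x + t *\<^sub>R d) has_derivative (\<lambda>s. s *\<^sub>R d)) (at t)"
      by (auto intro!: derivative_eq_intros)
    have c: "((\<lambda>t. g (x + t *\<^sub>R d)) has_derivative (\<lambda>s. G (x + t *\<^sub>R d) \<bullet> (s *\<^sub>R d))) (at t)"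
      using diff_chain_at[OF l der] by (simp add: o_def)
    have c2: "((\<lambda>t. g (x + t *\<^sub>R d)) has_real_derivative (G (x + t *\<^sub>R d) \<bullet> d)) (at t)"
      unfolding has_field_derivative_def
      by (rule has_derivative_eq_rhs[OF c]) (auto simp: fun_eq_iff)
    have d2: "((\<lambda>t. t * (G x \<bullet> d)) has_real_derivative (G x \<bullet> d)) (at t)"
      by (auto intro!: derivative_eq_intros)
    have d3: "((\<lambda>t. L / 2 * t\<^sup>2 * (norm d)\<^sup>2) has_real_derivative (L * t * (norm d)\<^sup>2)) (at t)"
      by (auto intro!: derivative_eq_intros)
    show ?thesis unfolding \<psi>_def by (intro DERIV_diff c2 d2 d3)
  qed
  have "\<psi> 1 \<le> \<psi> 0"
  proof (rule DERIV_nonpos_imp_nonincreasing[of 0 1])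
    fix t :: real assume t: "0 \<le> t" "t \<le> 1"
    have "(G (x + t *\<^sub>R d) - G x) \<bullet> d \<le> norm (G (x + t *\<^sub>R d) - G x) * norm d"
      by (rule norm_cauchy_schwarz)
    also have "\<dots> \<le> (L * norm (t *\<^sub>R d)) * norm d"
      using lip[of "x + t *\<^sub>R d" x] by (intro mult_right_mono) auto
    also have "\<dots> = L * t * (norm d)\<^sup>2" using t by (simp add: power2_eq_square)
    finally have "G (x + t *\<^sub>R d) \<bullet> d - G x \<bullet> d - L * t * (norm d)\<^sup>2 \<le> 0"
      by (simp add: inner_diff_left)
    then show "\<exists>y. DERIV \<psi> t :> y \<and> y \<le> 0" using dl by blast
  qed auto
  then show ?thesis unfolding \<psi>_def d_def by simp
qed



lemma three_point_mult:
  fixes y z w :: "'a::real_inner"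
  assumes hc: "convex_on D h" and D: "convex D" and y: "y \<in> D" and z: "z \<in> D" and eta: "\<eta> > 0"
    and mn: "\<And>u. u \<in> D \<Longrightarrow> h y + (norm (y - w))\<^sup>2 / (2 * \<eta>) \<le> h u + (norm (u - w))\<^sup>2 / (2 * \<eta>)"
  shows "2 * \<eta> * h y + (norm (y - w))\<^sup>2 + (norm (y - z))\<^sup>2 \<le> 2 * \<eta> * h z + (norm (z - w))\<^sup>2"
proof -
  have t: "h y + (norm (y - w))\<^sup>2 / (2 * \<eta>) + (norm (y - z))\<^sup>2 / (2 * \<eta>) \<le> h z + (norm (z - w))\<^sup>2 / (2 * \<eta>)"
    by (rule three_point[OF assms])
  have "2 * \<eta> * (h y + (norm (y - w))\<^sup>2 / (2 * \<eta>) + (norm (y - z))\<^sup>2 / (2 * \<eta>)) \<le> 2 * \<eta> * (h z + (norm (z - w))\<^sup>2 / (2 * \<eta>))"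
    using t eta by (intro mult_left_mono) auto
  then show ?thesis using eta by (simp add: distrib_left)
qed

lemma alg_core:
  fixes \<eta> :: real
  assumes eta: "\<eta> > 0"
  and T1: "2*\<eta>*hy + (na + 2*\<eta>*av + \<eta>^2*nv) + (na - 2*aab + nb) \<le> 2*\<eta>*hyb + (nb + 2*\<eta>*bv + \<eta>^2*nv)"
  and T2: "2*\<eta>*hyb + (nb + 2*\<eta>*bg + \<eta>^2*ng) + nb \<le> 2*\<eta>*hx + \<eta>^2*ng"
  and De: "6*\<eta>*fy \<le> 6*\<eta>*fx + 6*\<eta>*ag + na"
  and Y: "0 \<le> (na - 2*aab + nb) - 2*\<eta>*(ag - av - bg + bv) + \<eta>^2*(ng - 2*gv + nv)"
  shows "6*\<eta>*(fy + hy) \<le> 6*\<eta>*(fx + hx) - 3*nb - 2*na + 3*\<eta>^2*(ng - 2*gv + nv)"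
  using T1 T2 De Y by (simp add: algebra_simps)

lemma step_pointwise:
  fixes x y yb v g :: "'a::real_inner"
  assumes hc: "convex_on D h" and D: "convex D" and xD: "x \<in> D" and yD: "y \<in> D" and ybD: "yb \<in> D"
    and L: "L > 0" and eta: "\<eta> = 1 / (3 * L)"
    and miny: "\<And>u. u \<in> D \<Longrightarrow> h y + (norm (y - (x - \<eta> *\<^sub>R v)))\<^sup>2 / (2 * \<eta>) \<le> h u + (norm (u - (x - \<eta> *\<^sub>R v)))\<^sup>2 / (2 * \<eta>)"
    and minyb: "\<And>u. u \<in> D \<Longrightarrow> h yb + (norm (yb - (x - \<eta> *\<^sub>R g)))\<^sup>2 / (2 * \<eta>) \<le> h u + (norm (u - (x - \<eta> *\<^sub>R g)))\<^sup>2 / (2 * \<eta>)"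
    and desc: "fy \<le> fx + g \<bullet> (y - x) + L / 2 * (norm (y - x))\<^sup>2"
  shows "fy + h y \<le> fx + h x - (3 * L / 2) * (norm (yb - x))\<^sup>2 - L * (norm (y - x))\<^sup>2 + (norm (g - v))\<^sup>2 / (6 * L)"
proof -
  have e0: "\<eta> > 0" using L eta by simp
  define a where "a = y - x"
  define b where "b = yb - x"
  have T1: "2 * \<eta> * h y + (norm (y - (x - \<eta> *\<^sub>R v)))\<^sup>2 + (norm (y - yb))\<^sup>2 \<le> 2 * \<eta> * h yb + (norm (yb - (x - \<eta> *\<^sub>R v)))\<^sup>2"
    by (rule three_point_mult[OF hc D yD ybD e0 miny])
  have T2: "2 * \<eta> * h yb + (norm (yb - (x - \<eta> *\<^sub>R g)))\<^sup>2 + (norm (yb - x))\<^sup>2 \<le> 2 * \<eta> * h x + (norm (x - (x - \<eta> *\<^sub>R g)))\<^sup>2"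
    by (rule three_point_mult[OF hc D ybD xD e0 minyb])
  have q1: "y - (x - \<eta> *\<^sub>R v) = a + \<eta> *\<^sub>R v" "y - yb = a - b" "yb - (x - \<eta> *\<^sub>R v) = b + \<eta> *\<^sub>R v"
     "yb - (x - \<eta> *\<^sub>R g) = b + \<eta> *\<^sub>R g" "x - (x - \<eta> *\<^sub>R g) = \<eta> *\<^sub>R g" "yb - x = b" "y - x = a"
    by (simp_all add: a_def b_def algebra_simps)
  have ex: "(norm (a + \<eta> *\<^sub>R v))\<^sup>2 = (norm a)\<^sup>2 + 2*\<eta>*(a \<bullet> v) + \<eta>^2*(norm v)\<^sup>2"
    "(norm (a - b))\<^sup>2 = (norm a)\<^sup>2 - 2*(a \<bullet> b) + (norm b)\<^sup>2"
    "(norm (b + \<eta> *\<^sub>R v))\<^sup>2 = (norm b)\<^sup>2 + 2*\<eta>*(b \<bullet> v) + \<eta>^2*(norm v)\<^sup>2"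
    "(norm (b + \<eta> *\<^sub>R g))\<^sup>2 = (norm b)\<^sup>2 + 2*\<eta>*(b \<bullet> g) + \<eta>^2*(norm g)\<^sup>2"
    "(norm (\<eta> *\<^sub>R g))\<^sup>2 = \<eta>^2*(norm g)\<^sup>2"
    "(norm (g - v))\<^sup>2 = (norm g)\<^sup>2 - 2*(g \<bullet> v) + (norm v)\<^sup>2"
    by (simp_all add: nsq_add nsq_diff power_mult_distrib)
  have Y0: "0 \<le> (norm ((a - b) - \<eta> *\<^sub>R (g - v)))\<^sup>2" by simp
  have Y: "(norm ((a - b) - \<eta> *\<^sub>R (g - v)))\<^sup>2 = ((norm a)\<^sup>2 - 2*(a \<bullet> b) + (norm b)\<^sup>2) - 2*\<eta>*((a \<bullet> g) - (a \<bullet> v) - (b \<bullet> g) + (b \<bullet> v)) + \<eta>^2*((norm g)\<^sup>2 - 2*(g \<bullet> v) + (norm v)\<^sup>2)"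
  proof -
    have ie: "(a - b) \<bullet> (g - v) = (a \<bullet> g) - (a \<bullet> v) - (b \<bullet> g) + (b \<bullet> v)"
      by (simp add: inner_diff_left inner_diff_right)
    have "(norm ((a - b) - \<eta> *\<^sub>R (g - v)))\<^sup>2 = (norm (a - b))\<^sup>2 - 2*\<eta>*((a - b) \<bullet> (g - v)) + \<eta>^2*(norm (g - v))\<^sup>2"
      by (subst nsq_diff) (simp add: power_mult_distrib)
    also have "\<dots> = ((norm a)\<^sup>2 - 2*(a \<bullet> b) + (norm b)\<^sup>2) - 2*\<eta>*((a \<bullet> g) - (a \<bullet> v) - (b \<bullet> g) + (b \<bullet> v)) + \<eta>^2*((norm g)\<^sup>2 - 2*(g \<bullet> v) + (norm v)\<^sup>2)"
      by (simp only: ex(2) ex(6) ie)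
    finally show ?thesis .
  qed
  have De: "6*\<eta>*fy \<le> 6*\<eta>*fx + 6*\<eta>*(a \<bullet> g) + (norm a)\<^sup>2"
  proof -
    have "6*\<eta>*fy \<le> 6*\<eta>*(fx + g \<bullet> (y - x) + L / 2 * (norm (y - x))\<^sup>2)"
      using desc e0 by (intro mult_left_mono) auto
    also have "\<dots> = 6*\<eta>*fx + 6*\<eta>*(a \<bullet> g) + (norm a)\<^sup>2"
      using L unfolding eta q1 by (simp add: algebra_simps inner_commute)
    finally show ?thesis .
  qed
  have core: "6*\<eta>*(fy + h y) \<le> 6*\<eta>*(fx + h x) - 3*(norm b)\<^sup>2 - 2*(norm a)\<^sup>2 + 3*\<eta>^2*((norm g)\<^sup>2 - 2*(g \<bullet> v) + (norm v)\<^sup>2)"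
    apply (rule alg_core[OF e0 _ _ De])
    using T1 T2 Y0 unfolding q1 ex Y by (auto simp: inner_commute)
  have "fy + h y \<le> (6*\<eta>*(fx + h x) - 3*(norm b)\<^sup>2 - 2*(norm a)\<^sup>2 + 3*\<eta>^2*((norm g)\<^sup>2 - 2*(g \<bullet> v) + (norm v)\<^sup>2)) / (6*\<eta>)"
    using core e0 by (simp add: field_simps)
  also have "\<dots> = fx + h x - (3 * L / 2) * (norm b)\<^sup>2 - L * (norm a)\<^sup>2 + ((norm g)\<^sup>2 - 2*(g \<bullet> v) + (norm v)\<^sup>2) / (6 * L)"
    using L unfolding eta by (simp add: field_simps power2_eq_square)
  finally show ?thesis unfolding q1 ex .
qed



lemma sum_list_map_diff_const:
  fixes u :: "nat \<Rightarrow> 'a::real_vector"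
  shows "sum_list (map (\<lambda>i. u i - c) I) = sum_list (map u I) - real (length I) *\<^sub>R c"
  by (induction I) (auto simp: algebra_simps)

lemma lists_fin: "finite {I. set I \<subseteq> {..<n::nat} \<and> length I = k}"
  by (rule finite_lists_length_eq) simp

lemma lists_card: "card {I. set I \<subseteq> {..<n::nat} \<and> length I = k} = n ^ k"
  by (subst card_lists_length_eq) simp_all

lemma lists_ne: "n \<ge> 1 \<Longrightarrow> {I. set I \<subseteq> {..<n::nat} \<and> length I = k} \<noteq> {}"
proof -
  assume "n \<ge> 1"
  then have "replicate k 0 \<in> {I. set I \<subseteq> {..<n::nat} \<and> length I = k}" by auto
  then show ?thesis by blast
qed

lemma sum_lists_sq:
  fixes w :: "nat \<Rightarrow> 'a::real_inner"
  assumes w0: "(\<Sum>i<n. w i) = 0"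
  shows "(\<Sum>I\<in>{I. set I \<subseteq> {..<n} \<and> length I = k}. (norm (sum_list (map w I)))\<^sup>2)
         = real k * real n ^ (k - 1) * (\<Sum>i<n. (norm (w i))\<^sup>2)"
proof (induction k)
  case 0
  then show ?case by simp
next
  case (Suc k)
  define Lk where "Lk = {I. set I \<subseteq> {..<n} \<and> length I = k}"
  define W where "W = (\<Sum>i<n. (norm (w i))\<^sup>2)"
  have inj: "inj_on (\<lambda>(xs, i). i # xs) (Lk \<times> {..<n})" by (auto simp: inj_on_def)
  have "(\<Sum>I\<in>{I. set I \<subseteq> {..<n} \<and> length I = Suc k}. (norm (sum_list (map w I)))\<^sup>2)
      = (\<Sum>p\<in>Lk \<times> {..<n}. (norm (sum_list (map w ((\<lambda>(xs, i). i # xs) p))))\<^sup>2)"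
    unfolding lists_length_Suc_eq Lk_def[symmetric] by (subst sum.reindex[OF inj]) (simp add: o_def)
  also have "\<dots> = (\<Sum>xs\<in>Lk. \<Sum>i<n. (norm (w i + sum_list (map w xs)))\<^sup>2)"
    unfolding sum.cartesian_product by (intro sum.cong) auto
  also have "\<dots> = (\<Sum>xs\<in>Lk. W + real n * (norm (sum_list (map w xs)))\<^sup>2)"
  proof (rule sum.cong[OF refl])
    fix xs
    have "(\<Sum>i<n. (norm (w i + sum_list (map w xs)))\<^sup>2)
        = (\<Sum>i<n. (norm (w i))\<^sup>2 + 2 * (w i \<bullet> sum_list (map w xs)) + (norm (sum_list (map w xs)))\<^sup>2)"
      by (simp add: nsq_add)
    also have "\<dots> = W + 2 * ((\<Sum>i<n. w i) \<bullet> sum_list (map w xs)) + real n * (norm (sum_list (map w xs)))\<^sup>2"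
      by (simp add: sum.distrib W_def sum_distrib_left inner_sum_left)
    finally show "(\<Sum>i<n. (norm (w i + sum_list (map w xs)))\<^sup>2) = W + real n * (norm (sum_list (map w xs)))\<^sup>2"
      using w0 by simp
  qed
  also have "\<dots> = real (card Lk) * W + real n * (\<Sum>xs\<in>Lk. (norm (sum_list (map w xs)))\<^sup>2)"
    by (simp add: sum.distrib sum_distrib_left)
  also have "\<dots> = real n ^ k * W + real n * (real k * real n ^ (k - 1) * W)"
    using Suc.IH unfolding Lk_def W_def by (simp add: lists_card)
  also have "\<dots> = real (Suc k) * real n ^ (Suc k - 1) * W"
  proof (cases k)
    case 0 then show ?thesis by simp
  next
    case (Suc j) then show ?thesis by (simp add: algebra_simps)
  qed
  finally show ?case unfolding W_def .
qed

lemma var_bound: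
  fixes u :: "nat \<Rightarrow> 'a::real_inner"
  assumes n: "n \<ge> 1" and b: "b \<ge> 1"
  shows "measure_pmf.expectation (draw_indices n b)
           (\<lambda>I. (norm ((1 / real b) *\<^sub>R sum_list (map u I) - (1 / real n) *\<^sub>R (\<Sum>i<n. u i)))\<^sup>2)
         \<le> (\<Sum>i<n. (norm (u i))\<^sup>2) / (real n * real b)"
proof -
  define ub where "ub = (1 / real n) *\<^sub>R (\<Sum>i<n. u i)"
  define w where "w i = u i - ub" for i
  define Lb where "Lb = {I. set I \<subseteq> {..<n} \<and> length I = b}"
  have sumu: "(\<Sum>i<n. u i) = real n *\<^sub>R ub" using n by (simp add: ub_def)
  have w0: "(\<Sum>i<n. w i) = 0" by (simp add: w_def sum_subtractf sumu sum_constant_scaleR)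
  have pt: "(norm ((1 / real b) *\<^sub>R sum_list (map u I) - ub))\<^sup>2 = (norm (sum_list (map w I)))\<^sup>2 / (real b)\<^sup>2"
    if "I \<in> Lb" for I
  proof -
    have "length I = b" using that Lb_def by simp
    then have "sum_list (map w I) = sum_list (map u I) - real b *\<^sub>R ub"
      unfolding w_def by (simp add: sum_list_map_diff_const)
    then have "sum_list (map u I) = sum_list (map w I) + real b *\<^sub>R ub" by simp
    then have "(1 / real b) *\<^sub>R sum_list (map u I) = (1 / real b) *\<^sub>R sum_list (map w I) + ((1 / real b) * real b) *\<^sub>R ub"
      by (simp add: scaleR_add_right)
    also have "(1 / real b) * real b = 1" using b by simp
    finally have "(1 / real b) *\<^sub>R sum_list (map u I) - ub = (1 / real b) *\<^sub>R sum_list (map w I)"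
      by simp
    then show ?thesis by (simp add: power_divide power_mult_distrib)
  qed
  have "measure_pmf.expectation (draw_indices n b)
           (\<lambda>I. (norm ((1 / real b) *\<^sub>R sum_list (map u I) - ub))\<^sup>2)
       = (\<Sum>I\<in>Lb. (norm ((1 / real b) *\<^sub>R sum_list (map u I) - ub))\<^sup>2) / real (card Lb)"
    unfolding draw_indices_def Lb_def[symmetric]
    by (rule integral_pmf_of_set) (use lists_ne[OF n] in \<open>auto simp: Lb_def lists_fin\<close>)
  also have "\<dots> = (\<Sum>I\<in>Lb. (norm (sum_list (map w I)))\<^sup>2) / (real b)\<^sup>2 / real n ^ b"
    using pt by (simp add: Lb_def lists_card sum_divide_distrib)
  also have "\<dots> = real b * real n ^ (b - 1) * (\<Sum>i<n. (norm (w i))\<^sup>2) / (real b)\<^sup>2 / real n ^ b"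
    unfolding Lb_def sum_lists_sq[OF w0] ..
  also have "\<dots> = (\<Sum>i<n. (norm (w i))\<^sup>2) / (real n * real b)"
  proof -
    have "real n ^ b = real n * real n ^ (b - 1)" using b by (metis Suc_diff_le diff_Suc_1 power_Suc)
    then show ?thesis using n b by (simp add: power2_eq_square field_simps)
  qed
  also have "\<dots> \<le> (\<Sum>i<n. (norm (u i))\<^sup>2) / (real n * real b)"
  proof -
    have "(\<Sum>i<n. (norm (w i))\<^sup>2) = (\<Sum>i<n. (norm (u i))\<^sup>2 - 2 * (u i \<bullet> ub) + (norm ub)\<^sup>2)"
      by (simp add: w_def nsq_diff)
    also have "\<dots> = (\<Sum>i<n. (norm (u i))\<^sup>2) - 2 * ((\<Sum>i<n. u i) \<bullet> ub) + real n * (norm ub)\<^sup>2"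
      by (simp add: sum.distrib sum_subtractf inner_sum_left sum_distrib_left)
    also have "\<dots> = (\<Sum>i<n. (norm (u i))\<^sup>2) - real n * (norm ub)\<^sup>2"
      unfolding sumu by (simp add: power2_norm_eq_inner)
    finally have "(\<Sum>i<n. (norm (w i))\<^sup>2) \<le> (\<Sum>i<n. (norm (u i))\<^sup>2)" by simp
    then show ?thesis using n b by (intro divide_right_mono) auto
  qed
  finally show ?thesis unfolding ub_def .
qed



lemma Econst: "measure_pmf.expectation p (\<lambda>x. c) = (c::real)"
  by simp

lemma Eadd:
  fixes f g :: "'a \<Rightarrow> real"
  assumes "finite (set_pmf p)"
  shows "measure_pmf.expectation p (\<lambda>x. f x + g x) = measure_pmf.expectation p f + measure_pmf.expectation p g"
  by (rule Bochner_Integration.integral_add) (auto intro: integrable_measure_pmf_finite[OF assms])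

lemma Emono:
  fixes f g :: "'a \<Rightarrow> real"
  assumes "finite (set_pmf p)" "\<And>x. x \<in> set_pmf p \<Longrightarrow> f x \<le> g x"
  shows "measure_pmf.expectation p f \<le> measure_pmf.expectation p g"
  by (rule integral_mono_AE) (auto intro: integrable_measure_pmf_finite[OF assms(1)] simp: AE_measure_pmf_iff assms(2))

lemma Econg:
  fixes f g :: "'a \<Rightarrow> real"
  assumes "\<And>x. x \<in> set_pmf p \<Longrightarrow> f x = g x"
  shows "measure_pmf.expectation p f = measure_pmf.expectation p g"
  by (rule integral_cong_AE) (auto simp: AE_measure_pmf_iff assms)

lemma Ebind:
  fixes g :: "'b \<Rightarrow> real"
  assumes "finite (set_pmf p)" "\<And>x. x \<in> set_pmf p \<Longrightarrow> finite (set_pmf (f x))"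
  shows "measure_pmf.expectation (bind_pmf p f) g = measure_pmf.expectation p (\<lambda>x. measure_pmf.expectation (f x) g)"
proof -
  have "measure_pmf.expectation (bind_pmf p f) g = (\<Sum>a\<in>set_pmf p. pmf p a *\<^sub>R measure_pmf.expectation (f a) g)"
    by (rule pmf_expectation_bind) (use assms in auto)
  also have "\<dots> = measure_pmf.expectation p (\<lambda>x. measure_pmf.expectation (f x) g)"
    by (rule integral_measure_pmf[OF assms(1), symmetric]) auto
  finally show ?thesis .
qed



locale svrg =
  fixes n :: nat and fs :: "nat \<Rightarrow> 'a::euclidean_space \<Rightarrow> real"
    and gf :: "nat \<Rightarrow> 'a \<Rightarrow> 'a" and L :: real
    and D :: "'a set" and h :: "'a \<Rightarrow> real" and b m :: nat and \<eta> :: real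
  assumes n_pos: "n \<ge> 1"
    and grad: "\<And>i x. i < n \<Longrightarrow> (fs i has_derivative (\<lambda>v. gf i x \<bullet> v)) (at x)"
    and L_pos: "L > 0"
    and smooth: "\<And>i x y. i < n \<Longrightarrow> norm (gf i x - gf i y) \<le> L * norm (x - y)"
    and D_ne: "D \<noteq> {}" and D_closed: "closed D"
    and h_convex: "convex_on D h" and D_convex: "convex D"
    and h_lsc: "lsc_ext D h"
    and eta: "\<eta> = 1 / (3 * L)"
    and b_pos: "b \<ge> 1" and m_pos: "m \<ge> 1" and bm: "real m ^ 2 \<le> real b"
begin

definition f where "f x = (\<Sum>i<n. fs i x) / real n"
definition F where "F x = f x + h x"
abbreviation gfull where "gfull \<equiv> full_grad n gf"
definition Gm where "Gm x = (norm (grad_map \<eta> D h n gf x))\<^sup>2 / (18 * L)"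

lemma eta_pos: "\<eta> > 0" using eta L_pos by simp

lemma prox_in: "prox \<eta> D h w \<in> D"
  using prox_spec(1)[OF D_closed D_convex D_ne h_convex h_lsc eta_pos] .

lemma prox_min: "z \<in> D \<Longrightarrow> h (prox \<eta> D h w) + (norm (prox \<eta> D h w - w))\<^sup>2 / (2 * \<eta>) \<le> h z + (norm (z - w))\<^sup>2 / (2 * \<eta>)"
  using prox_spec(2)[OF D_closed D_convex D_ne h_convex h_lsc eta_pos] .

lemma f_desc: "f y \<le> f x + gfull x \<bullet> (y - x) + L / 2 * (norm (y - x))\<^sup>2"
proof -
  have each: "fs i y \<le> fs i x + gf i x \<bullet> (y - x) + L / 2 * (norm (y - x))\<^sup>2" if "i < n" for i
    by (rule descent[OF grad smooth]) (use that in auto)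
  have "(\<Sum>i<n. fs i y) \<le> (\<Sum>i<n. fs i x + gf i x \<bullet> (y - x) + L / 2 * (norm (y - x))\<^sup>2)"
    using each by (intro sum_mono) auto
  also have "\<dots> = (\<Sum>i<n. fs i x) + (\<Sum>i<n. gf i x) \<bullet> (y - x) + real n * (L / 2 * (norm (y - x))\<^sup>2)"
    by (simp add: sum.distrib inner_sum_left)
  finally have "(\<Sum>i<n. fs i y) / real n \<le> ((\<Sum>i<n. fs i x) + (\<Sum>i<n. gf i x) \<bullet> (y - x) + real n * (L / 2 * (norm (y - x))\<^sup>2)) / real n"
    using n_pos by (intro divide_right_mono) auto
  also have "\<dots> = f x + gfull x \<bullet> (y - x) + L / 2 * (norm (y - x))\<^sup>2"
    using n_pos by (simp add: f_def full_grad_def add_divide_distrib)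
  finally show ?thesis unfolding f_def .
qed

lemma Gm_eq: "Gm x = (3 * L / 2) * (norm (prox \<eta> D h (x - \<eta> *\<^sub>R gfull x) - x))\<^sup>2 / 3"
proof -
  have "grad_map \<eta> D h n gf x = (1 / \<eta>) *\<^sub>R (x - prox \<eta> D h (x - \<eta> *\<^sub>R gfull x))"
    by (simp add: grad_map_def)
  then have "(norm (grad_map \<eta> D h n gf x))\<^sup>2 = (3 * L)\<^sup>2 * (norm (prox \<eta> D h (x - \<eta> *\<^sub>R gfull x) - x))\<^sup>2"
    using L_pos by (simp add: eta power_mult_distrib norm_minus_commute)
  then show ?thesis using L_pos by (simp add: Gm_def power2_eq_square field_simps)
qed

definition Lb where "Lb = {I. set I \<subseteq> {..<n} \<and> length I = b}"

lemma Lb_fin: "finite Lb" and Lb_ne: "Lb \<noteq> {}"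
  unfolding Lb_def using lists_fin lists_ne[OF n_pos] by auto

lemma draw_set: "set_pmf (draw_indices n b) = Lb"
  unfolding draw_indices_def Lb_def[symmetric] using Lb_fin Lb_ne by simp

lemma step_set: "set_pmf (svrg_step n b \<eta> D h gf xt g x) \<subseteq> D"
  "finite (set_pmf (svrg_step n b \<eta> D h gf xt g x))"
  unfolding svrg_step_def using prox_in Lb_fin by (auto simp: draw_set Let_def)

lemma young: "(norm (p + q))\<^sup>2 \<le> (1 + real m) * (norm p)\<^sup>2 + (1 + 1 / real m) * (norm (q::'a))\<^sup>2"
proof -
  have m0: "real m > 0" using m_pos by simp
  have "0 \<le> (norm (real m *\<^sub>R p - q))\<^sup>2" by simp
  also have "\<dots> = (real m)\<^sup>2 * (norm p)\<^sup>2 - 2 * real m * (p \<bullet> q) + (norm q)\<^sup>2"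
    by (subst nsq_diff) (simp add: power_mult_distrib)
  finally have "2 * real m * (p \<bullet> q) \<le> (real m)\<^sup>2 * (norm p)\<^sup>2 + (norm q)\<^sup>2" by simp
  then have "2 * (p \<bullet> q) \<le> real m * (norm p)\<^sup>2 + (norm q)\<^sup>2 / real m"
    using m0 by (simp add: field_simps power2_eq_square)
  then show ?thesis by (simp add: nsq_add algebra_simps)
qed

end



context svrg begin

lemma var_step:
  "measure_pmf.expectation (draw_indices n b)
     (\<lambda>I. (norm (gfull x - ((1 / real b) *\<^sub>R (\<Sum>i\<leftarrow>I. gf i x - gf i xt) + gfull xt)))\<^sup>2)
   \<le> L\<^sup>2 * (norm (x - xt))\<^sup>2 / real b"
proof -
  define u where "u i = gf i x - gf i xt" for i
  have gd: "gfull x - gfull xt = (1 / real n) *\<^sub>R (\<Sum>i<n. u i)"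
    by (simp add: full_grad_def u_def sum_subtractf scaleR_diff_right)
  have eq: "(norm (gfull x - ((1 / real b) *\<^sub>R (\<Sum>i\<leftarrow>I. gf i x - gf i xt) + gfull xt)))\<^sup>2
      = (norm ((1 / real b) *\<^sub>R sum_list (map u I) - (1 / real n) *\<^sub>R (\<Sum>i<n. u i)))\<^sup>2" for I
  proof -
    have "gfull x - ((1 / real b) *\<^sub>R (\<Sum>i\<leftarrow>I. gf i x - gf i xt) + gfull xt)
        = - ((1 / real b) *\<^sub>R sum_list (map u I) - (1 / real n) *\<^sub>R (\<Sum>i<n. u i))"
      using gd unfolding u_def by (simp add: algebra_simps)
    then show ?thesis by (simp only: norm_minus_cancel)
  qed
  have "measure_pmf.expectation (draw_indices n b)
     (\<lambda>I. (norm (gfull x - ((1 / real b) *\<^sub>R (\<Sum>i\<leftarrow>I. gf i x - gf i xt) + gfull xt)))\<^sup>2)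
     \<le> (\<Sum>i<n. (norm (u i))\<^sup>2) / (real n * real b)"
    unfolding eq by (rule var_bound[OF n_pos b_pos])
  also have "\<dots> \<le> (real n * (L\<^sup>2 * (norm (x - xt))\<^sup>2)) / (real n * real b)"
  proof -
    have "(\<Sum>i<n. (norm (u i))\<^sup>2) \<le> (\<Sum>i<n. L\<^sup>2 * (norm (x - xt))\<^sup>2)"
    proof (rule sum_mono)
      fix i assume "i \<in> {..<n}"
      then have "norm (u i) \<le> L * norm (x - xt)" using smooth u_def by auto
      then have "(norm (u i))\<^sup>2 \<le> (L * norm (x - xt))\<^sup>2" by (intro power_mono) auto
      then show "(norm (u i))\<^sup>2 \<le> L\<^sup>2 * (norm (x - xt))\<^sup>2" by (simp add: power_mult_distrib)
    qed
    then show ?thesis using n_pos b_pos by (intro divide_right_mono) auto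
  qed
  also have "\<dots> = L\<^sup>2 * (norm (x - xt))\<^sup>2 / real b" using n_pos by simp
  finally show ?thesis .
qed

lemma step_exp:
  assumes xD: "x \<in> D" and c0: "c \<ge> 0" and cL: "c * (1 + real m) \<le> L"
  shows "measure_pmf.expectation (svrg_step n b \<eta> D h gf xt (gfull xt) x) (\<lambda>y. F y + c * (norm (y - xt))\<^sup>2)
    \<le> F x - Gm x + (c * (1 + 1 / real m) + L / (6 * real b)) * (norm (x - xt))\<^sup>2"
proof -
  define v where "v I = (1 / real b) *\<^sub>R (\<Sum>i\<leftarrow>I. gf i x - gf i xt) + gfull xt" for I
  define yb where "yb = prox \<eta> D h (x - \<eta> *\<^sub>R gfull x)"
  define K where "K = F x - Gm x + c * (1 + 1 / real m) * (norm (x - xt))\<^sup>2"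
  have pw: "F (prox \<eta> D h (x - \<eta> *\<^sub>R v I)) + c * (norm (prox \<eta> D h (x - \<eta> *\<^sub>R v I) - xt))\<^sup>2
      \<le> K + (norm (gfull x - v I))\<^sup>2 / (6 * L)" for I
  proof -
    define y where "y = prox \<eta> D h (x - \<eta> *\<^sub>R v I)"
    have sp: "f y + h y \<le> f x + h x - (3 * L / 2) * (norm (yb - x))\<^sup>2 - L * (norm (y - x))\<^sup>2 + (norm (gfull x - v I))\<^sup>2 / (6 * L)"
      unfolding y_def yb_def
      by (rule step_pointwise[OF h_convex D_convex xD prox_in prox_in L_pos eta prox_min prox_min f_desc])
    have "(norm (y - xt))\<^sup>2 \<le> (1 + real m) * (norm (y - x))\<^sup>2 + (1 + 1 / real m) * (norm (x - xt))\<^sup>2"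
      using young[of "y - x" "x - xt"] by simp
    then have "c * (norm (y - xt))\<^sup>2 \<le> c * ((1 + real m) * (norm (y - x))\<^sup>2 + (1 + 1 / real m) * (norm (x - xt))\<^sup>2)"
      using c0 by (intro mult_left_mono) auto
    also have "\<dots> = (c * (1 + real m)) * (norm (y - x))\<^sup>2 + c * (1 + 1 / real m) * (norm (x - xt))\<^sup>2"
      by (simp add: algebra_simps)
    also have "\<dots> \<le> L * (norm (y - x))\<^sup>2 + c * (1 + 1 / real m) * (norm (x - xt))\<^sup>2"
      using cL by (intro add_right_mono mult_right_mono) auto
    finally have cy: "c * (norm (y - xt))\<^sup>2 \<le> L * (norm (y - x))\<^sup>2 + c * (1 + 1 / real m) * (norm (x - xt))\<^sup>2" .
    have gm: "Gm x \<le> (3 * L / 2) * (norm (yb - x))\<^sup>2"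
      unfolding Gm_eq yb_def[symmetric] using L_pos by simp
    show ?thesis using sp cy gm unfolding K_def F_def y_def by linarith
  qed
  have "measure_pmf.expectation (svrg_step n b \<eta> D h gf xt (gfull xt) x) (\<lambda>y. F y + c * (norm (y - xt))\<^sup>2)
      = measure_pmf.expectation (draw_indices n b) (\<lambda>I. F (prox \<eta> D h (x - \<eta> *\<^sub>R v I)) + c * (norm (prox \<eta> D h (x - \<eta> *\<^sub>R v I) - xt))\<^sup>2)"
    unfolding svrg_step_def v_def by (simp add: Let_def)
  also have "\<dots> \<le> measure_pmf.expectation (draw_indices n b) (\<lambda>I. K + (norm (gfull x - v I))\<^sup>2 / (6 * L))"
    by (rule Emono) (use pw Lb_fin in \<open>auto simp: draw_set\<close>)
  also have "\<dots> = K + measure_pmf.expectation (draw_indices n b) (\<lambda>I. (norm (gfull x - v I))\<^sup>2) / (6 * L)"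
    by (subst Eadd) (auto simp: draw_set Lb_fin)
  also have "\<dots> \<le> K + (L\<^sup>2 * (norm (x - xt))\<^sup>2 / real b) / (6 * L)"
    using var_step[of x xt] L_pos unfolding v_def by (intro add_left_mono divide_right_mono) auto
  also have "\<dots> = F x - Gm x + (c * (1 + 1 / real m) + L / (6 * real b)) * (norm (x - xt))\<^sup>2"
    unfolding K_def using L_pos b_pos by (simp add: field_simps power2_eq_square)
  finally show ?thesis .
qed

end



context svrg begin

lemma inner_set:
  assumes "x \<in> D"
  shows "set_pmf (svrg_inner n b \<eta> D h gf xt g k x) \<subseteq> {xs. length xs = Suc k \<and> set xs \<subseteq> D}
       \<and> finite (set_pmf (svrg_inner n b \<eta> D h gf xt g k x))"
  using assms
proof (induction k arbitrary: x)
  case 0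
  then show ?case by simp
next
  case (Suc k)
  have ih: "\<And>y. y \<in> set_pmf (svrg_step n b \<eta> D h gf xt g x) \<Longrightarrow>
     set_pmf (svrg_inner n b \<eta> D h gf xt g k y) \<subseteq> {xs. length xs = Suc k \<and> set xs \<subseteq> D}
       \<and> finite (set_pmf (svrg_inner n b \<eta> D h gf xt g k y))"
    using Suc.IH step_set(1) by blast
  show ?case
  proof
    show "set_pmf (svrg_inner n b \<eta> D h gf xt g (Suc k) x) \<subseteq> {xs. length xs = Suc (Suc k) \<and> set xs \<subseteq> D}"
    proof
      fix xs assume "xs \<in> set_pmf (svrg_inner n b \<eta> D h gf xt g (Suc k) x)"
      then obtain y ys where y: "y \<in> set_pmf (svrg_step n b \<eta> D h gf xt g x)"
        and ys: "ys \<in> set_pmf (svrg_inner n b \<eta> D h gf xt g k y)" and xs: "xs = x # ys" by auto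
      have "length ys = Suc k" "set ys \<subseteq> D" using ih[OF y] ys by auto
      then show "xs \<in> {xs. length xs = Suc (Suc k) \<and> set xs \<subseteq> D}" using xs Suc.prems by auto
    qed
    show "finite (set_pmf (svrg_inner n b \<eta> D h gf xt g (Suc k) x))"
      using ih step_set(2)[of xt g x] by auto
  qed
qed

lemma inner_bound:
  assumes xD: "x \<in> D" and km: "k \<le> m"
    and c0: "c 0 = 0" and cS: "\<And>r. r < m \<Longrightarrow> c (Suc r) = c r * (1 + 1 / real m) + L / (6 * real b)"
    and cL: "\<And>r. r < m \<Longrightarrow> c r * (1 + real m) \<le> L" and cnn: "\<And>r. c r \<ge> 0"
  shows "measure_pmf.expectation (svrg_inner n b \<eta> D h gf xt (gfull xt) k x)
           (\<lambda>xs. sum_list (map Gm (butlast xs)) + F (last xs)) \<le> F x + c k * (norm (x - xt))\<^sup>2"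
  using xD km
proof (induction k arbitrary: x)
  case 0
  then show ?case using c0 by simp
next
  case (Suc k)
  define st where "st = svrg_step n b \<eta> D h gf xt (gfull xt) x"
  define inn where "inn y = svrg_inner n b \<eta> D h gf xt (gfull xt) k y" for y
  define g where "g xs = sum_list (map Gm (butlast xs)) + F (last xs)" for xs
  have stD: "\<And>y. y \<in> set_pmf st \<Longrightarrow> y \<in> D" and stF: "finite (set_pmf st)"
    using step_set unfolding st_def by auto
  have innS: "\<And>y. y \<in> set_pmf st \<Longrightarrow> set_pmf (inn y) \<subseteq> {xs. length xs = Suc k \<and> set xs \<subseteq> D} \<and> finite (set_pmf (inn y))"
    unfolding inn_def using inner_set stD by blast
  have "measure_pmf.expectation (svrg_inner n b \<eta> D h gf xt (gfull xt) (Suc k) x) g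
      = measure_pmf.expectation st (\<lambda>y. measure_pmf.expectation (map_pmf (\<lambda>ys. x # ys) (inn y)) g)"
    unfolding st_def[symmetric] inn_def[symmetric] svrg_inner.simps
    by (rule Ebind) (use stF innS in auto)
  also have "\<dots> = measure_pmf.expectation st (\<lambda>y. Gm x + measure_pmf.expectation (inn y) g)"
  proof (rule Econg)
    fix y assume y: "y \<in> set_pmf st"
    have "measure_pmf.expectation (map_pmf (\<lambda>ys. x # ys) (inn y)) g = measure_pmf.expectation (inn y) (\<lambda>ys. g (x # ys))"
      by simp
    also have "\<dots> = measure_pmf.expectation (inn y) (\<lambda>ys. Gm x + g ys)"
    proof (rule Econg)
      fix ys assume "ys \<in> set_pmf (inn y)"
      then have "ys \<noteq> []" using innS[OF y] by auto
      then show "g (x # ys) = Gm x + g ys" unfolding g_def by simp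
    qed
    also have "\<dots> = Gm x + measure_pmf.expectation (inn y) g"
      by (subst Eadd) (use innS[OF y] in auto)
    finally show "measure_pmf.expectation (map_pmf (\<lambda>ys. x # ys) (inn y)) g = Gm x + measure_pmf.expectation (inn y) g" .
  qed
  also have "\<dots> \<le> measure_pmf.expectation st (\<lambda>y. Gm x + (F y + c k * (norm (y - xt))\<^sup>2))"
  proof (rule Emono[OF stF])
    fix y assume "y \<in> set_pmf st"
    then have "measure_pmf.expectation (inn y) g \<le> F y + c k * (norm (y - xt))\<^sup>2"
      using Suc.IH[of y] stD Suc.prems unfolding inn_def g_def by auto
    then show "Gm x + measure_pmf.expectation (inn y) g \<le> Gm x + (F y + c k * (norm (y - xt))\<^sup>2)" by simp
  qed
  also have "\<dots> = Gm x + measure_pmf.expectation st (\<lambda>y. F y + c k * (norm (y - xt))\<^sup>2)"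
    by (subst Eadd[OF stF]) simp
  also have "\<dots> \<le> Gm x + (F x - Gm x + (c k * (1 + 1 / real m) + L / (6 * real b)) * (norm (x - xt))\<^sup>2)"
  proof -
    have "k < m" using Suc.prems(2) by simp
    then show ?thesis unfolding st_def using step_exp[OF Suc.prems(1) cnn cL[of k], where xt=xt] by linarith
  qed
  also have "\<dots> = F x + c (Suc k) * (norm (x - xt))\<^sup>2" using cS[of k] Suc.prems(2) by simp
  finally show ?case unfolding g_def .
qed

lemma outer_set:
  assumes "x \<in> D"
  shows "set_pmf (svrg_outer n b \<eta> D h gf m S x) \<subseteq> {xs. length xs = S * m}
       \<and> finite (set_pmf (svrg_outer n b \<eta> D h gf m S x))"
  using assms
proof (induction S arbitrary: x)
  case 0
  then show ?case by simp
next
  case (Suc S)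
  define I where "I = svrg_inner n b \<eta> D h gf x (gfull x) m x"
  have IS: "set_pmf I \<subseteq> {xs. length xs = Suc m \<and> set xs \<subseteq> D}" "finite (set_pmf I)"
    using inner_set[OF Suc.prems] unfolding I_def by auto
  have lastD: "last xs \<in> D" if "xs \<in> set_pmf I" for xs
  proof -
    have "xs \<noteq> []" "set xs \<subseteq> D" using IS that by auto
    then show ?thesis using last_in_set by blast
  qed
  show ?case
  proof
    show "set_pmf (svrg_outer n b \<eta> D h gf m (Suc S) x) \<subseteq> {xs. length xs = Suc S * m}"
    proof
      fix zs assume "zs \<in> set_pmf (svrg_outer n b \<eta> D h gf m (Suc S) x)"
      then obtain xs rest where xs: "xs \<in> set_pmf I"
        and rest: "rest \<in> set_pmf (svrg_outer n b \<eta> D h gf m S (last xs))" and zs: "zs = butlast xs @ rest"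
        unfolding I_def by auto
      have "length rest = S * m" using Suc.IH[OF lastD[OF xs]] rest by auto
      moreover have "length xs = Suc m" using IS xs by auto
      ultimately show "zs \<in> {xs. length xs = Suc S * m}" using zs by simp
    qed
    have "finite (\<Union>xs\<in>set_pmf I. (\<lambda>rest. butlast xs @ rest) ` set_pmf (svrg_outer n b \<eta> D h gf m S (last xs)))"
      by (intro finite_UN_I IS(2) finite_imageI) (use Suc.IH lastD in blast)
    then show "finite (set_pmf (svrg_outer n b \<eta> D h gf m (Suc S) x))"
      unfolding I_def by simp
  qed
qed

lemma outer_bound:
  assumes xD: "x \<in> D"
    and c0: "c 0 = 0" and cS: "\<And>r. r < m \<Longrightarrow> c (Suc r) = c r * (1 + 1 / real m) + L / (6 * real b)"
    and cL: "\<And>r. r < m \<Longrightarrow> c r * (1 + real m) \<le> L" and cnn: "\<And>r. c r \<ge> 0"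
    and Fs: "\<And>y. y \<in> D \<Longrightarrow> Fs \<le> F y"
  shows "measure_pmf.expectation (svrg_outer n b \<eta> D h gf m S x) (\<lambda>xs. sum_list (map Gm xs)) \<le> F x - Fs"
  using xD
proof (induction S arbitrary: x)
  case 0
  then show ?case using Fs by simp
next
  case (Suc S)
  define I where "I = svrg_inner n b \<eta> D h gf x (gfull x) m x"
  define Ou where "Ou y = svrg_outer n b \<eta> D h gf m S y" for y
  define sg where "sg xs = sum_list (map Gm xs)" for xs
  have IS: "set_pmf I \<subseteq> {xs. length xs = Suc m \<and> set xs \<subseteq> D}" "finite (set_pmf I)"
    using inner_set[OF Suc.prems] unfolding I_def by auto
  have lastD: "last xs \<in> D" if "xs \<in> set_pmf I" for xs
  proof -
    have "xs \<noteq> []" "set xs \<subseteq> D" using IS that by auto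
    then show ?thesis using last_in_set by blast
  qed
  have OF: "finite (set_pmf (Ou (last xs)))" if "xs \<in> set_pmf I" for xs
    using outer_set[OF lastD[OF that]] unfolding Ou_def by auto
  have "measure_pmf.expectation (svrg_outer n b \<eta> D h gf m (Suc S) x) sg
      = measure_pmf.expectation I (\<lambda>xs. measure_pmf.expectation (map_pmf (\<lambda>rest. butlast xs @ rest) (Ou (last xs))) sg)"
    unfolding svrg_outer.simps I_def[symmetric] Ou_def[symmetric]
    by (rule Ebind) (use IS OF in auto)
  also have "\<dots> = measure_pmf.expectation I (\<lambda>xs. sg (butlast xs) + measure_pmf.expectation (Ou (last xs)) sg)"
  proof (rule Econg)
    fix xs assume xs: "xs \<in> set_pmf I"
    have "measure_pmf.expectation (map_pmf (\<lambda>rest. butlast xs @ rest) (Ou (last xs))) sg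
        = measure_pmf.expectation (Ou (last xs)) (\<lambda>rest. sg (butlast xs) + sg rest)"
      by (simp add: sg_def)
    also have "\<dots> = sg (butlast xs) + measure_pmf.expectation (Ou (last xs)) sg"
      by (subst Eadd) (use OF[OF xs] in auto)
    finally show "measure_pmf.expectation (map_pmf (\<lambda>rest. butlast xs @ rest) (Ou (last xs))) sg
        = sg (butlast xs) + measure_pmf.expectation (Ou (last xs)) sg" .
  qed
  also have "\<dots> \<le> measure_pmf.expectation I (\<lambda>xs. (sg (butlast xs) + F (last xs)) + (- Fs))"
  proof (rule Emono[OF IS(2)])
    fix xs assume xs: "xs \<in> set_pmf I"
    have "measure_pmf.expectation (Ou (last xs)) sg \<le> F (last xs) - Fs"
      using Suc.IH[OF lastD[OF xs]] unfolding Ou_def sg_def .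
    then show "sg (butlast xs) + measure_pmf.expectation (Ou (last xs)) sg \<le> (sg (butlast xs) + F (last xs)) + (- Fs)"
      by simp
  qed
  also have "\<dots> = measure_pmf.expectation I (\<lambda>xs. sg (butlast xs) + F (last xs)) - Fs"
    by (subst Eadd[OF IS(2)]) simp
  also have "\<dots> \<le> F x + c m * (norm (x - x))\<^sup>2 - Fs"
    using inner_bound[OF Suc.prems le_refl c0 cS cL cnn, where xt=x] unfolding I_def sg_def by simp
  also have "\<dots> = F x - Fs" by simp
  finally show ?case unfolding sg_def .
qed

end



theorem theorem2:
  fixes n :: nat and fs :: "nat \<Rightarrow> 'a::euclidean_space \<Rightarrow> real"
    and gf :: "nat \<Rightarrow> 'a \<Rightarrow> 'a" and L :: real
    and D :: "'a set" and h :: "'a \<Rightarrow> real"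
    and xstar x0 :: 'a and T m b :: nat and \<eta> :: real
  assumes n_pos: "n \<ge> 1"
    and grad: "\<And>i x. i < n \<Longrightarrow> (fs i has_derivative (\<lambda>v. gf i x \<bullet> v)) (at x)"
    and L_pos: "L > 0"
    and smooth: "\<And>i x y. i < n \<Longrightarrow> norm (gf i x - gf i y) \<le> L * norm (x - y)"
    and D_ne: "D \<noteq> {}" and D_closed: "closed D"
    and h_convex: "convex_on D h" and D_convex: "convex D"
    and h_lsc: "lsc_ext D h"
    and xstar_min: "xstar \<in> D"
      "\<And>y. y \<in> D \<Longrightarrow> (\<Sum>i<n. fs i xstar) / real n + h xstar \<le> (\<Sum>i<n. fs i y) / real n + h y"
    and b_def: "real b = real n powr (2/3)"
    and \<eta>_def: "\<eta> = 1 / (3 * L)"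
    and m_def: "m = nat \<lfloor>real n powr (1/3)\<rfloor>"
    and T_pos: "T > 0" and T_mult: "m dvd T"
  shows "ereal (measure_pmf.expectation (prox_svrg n D h gf x0 T m b \<eta>)
                  (\<lambda>x. (norm (grad_map \<eta> D h n gf x))\<^sup>2))
         \<le> ereal (18 * L) * (F_ext D (\<lambda>x. (\<Sum>i<n. fs i x) / real n) h x0
                             - ereal ((\<Sum>i<n. fs i xstar) / real n + h xstar)) / ereal (real T)"
proof -
  define r3 where "r3 = real n powr (1/3)"
  have n1: "real n \<ge> 1" using n_pos by simp
  have r3_1: "r3 \<ge> 1" unfolding r3_def using n1 by (rule ge_one_powr_ge_zero) simp
  have r3sq: "r3 ^ 2 = real b"
  proof -
    have "r3 ^ 2 = r3 * r3" by (simp add: power2_eq_square)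
    also have "\<dots> = real n powr (1/3 + 1/3)" unfolding r3_def by (rule powr_add[symmetric])
    also have "(1/3 + 1/3 :: real) = 2/3" by simp
    also have "real n powr (2/3) = real b" using b_def by simp
    finally show ?thesis .
  qed
  have m_le: "real m \<le> r3" unfolding m_def r3_def[symmetric] using r3_1 by simp
  have m1: "m \<ge> 1" unfolding m_def r3_def[symmetric] using r3_1 by (simp add: le_nat_floor)
  have bm: "real m ^ 2 \<le> real b" unfolding r3sq[symmetric] using m_le m1 by (intro power_mono) auto
  have "real m ^ 2 \<ge> 1" using m1 by simp
  then have "real b \<ge> 1" using bm by linarith
  then have b1: "b \<ge> 1" by simp
  interpret S: svrg n fs gf L D h b m \<eta>
    by unfold_locales (use assms b1 m1 bm in auto)
  show ?thesis
  proof (cases "x0 \<in> D")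
    case False
    then have "F_ext D (\<lambda>x. (\<Sum>i<n. fs i x) / real n) h x0 = \<infinity>" by (simp add: F_ext_def)
    then have "ereal (18 * L) * (F_ext D (\<lambda>x. (\<Sum>i<n. fs i x) / real n) h x0
                             - ereal ((\<Sum>i<n. fs i xstar) / real n + h xstar)) / ereal (real T) = \<infinity>"
      using L_pos T_pos by (simp add: divide_ereal_def)
    then show ?thesis by simp
  next
    case True
    define Fs where "Fs = (\<Sum>i<n. fs i xstar) / real n + h xstar"
    have Fs: "\<And>y. y \<in> D \<Longrightarrow> Fs \<le> S.F y"
      using xstar_min(2) unfolding Fs_def S.F_def S.f_def by simp
    define c where "c r = L * real m / (6 * real b) * ((1 + 1 / real m) ^ r - 1)" for r
    have c0: "c 0 = 0" by (simp add: c_def)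
    have cS: "c (Suc r) = c r * (1 + 1 / real m) + L / (6 * real b)" for r
      using m1 b1 by (simp add: c_def field_simps)
    have cnn: "c r \<ge> 0" for r
    proof -
      have "(1 + 1 / real m) ^ r \<ge> 1" by (rule one_le_power) simp
      then show ?thesis using L_pos unfolding c_def by simp
    qed
    have cL: "c r * (1 + real m) \<le> L" if "r < m" for r
    proof -
      have "(1 + 1 / real m) ^ r \<le> (1 + 1 / real m) ^ m" using that by (intro power_increasing) auto
      also have "\<dots> \<le> exp 1"
      proof -
        have "(1::real) \<ge> - real m" "m > 0" using m1 by auto
        from exp_ge_one_plus_x_over_n_power_n[OF this] show ?thesis by simp
      qed
      also have "\<dots> \<le> 3" by (rule exp_le)
      finally have a3: "(1 + 1 / real m) ^ r - 1 \<le> 2" by simp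
      have k0: "L * real m / (6 * real b) \<ge> 0" using L_pos by simp
      have "c r \<le> L * real m / (6 * real b) * 2" unfolding c_def using a3 k0 by (rule mult_left_mono)
      then have "c r * (1 + real m) \<le> L * real m / (6 * real b) * 2 * (1 + real m)" by (intro mult_right_mono) auto
      also have "\<dots> = L * (real m * (1 + real m)) / (3 * real b)" by (simp add: field_simps)
      also have "\<dots> \<le> L * (3 * real b) / (3 * real b)"
      proof -
        have "real m \<le> real m ^ 2" using m1 by (simp add: power2_eq_square)
        then have "real m * (1 + real m) \<le> 3 * real b" using bm by (simp add: power2_eq_square algebra_simps)
        then show ?thesis using L_pos b1 by (intro divide_right_mono mult_left_mono) auto
      qed
      also have "\<dots> = L" using b1 by simp
      finally show ?thesis .
    qed
    obtain q where q: "T = m * q" using T_mult by blast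
    define SS where "SS = nat \<lceil>real T / real m\<rceil>"
    have SSq: "SS = q" unfolding SS_def q using m1 by simp
    have SSm: "SS * m = T" using SSq q by simp
    define Ou where "Ou = svrg_outer n b \<eta> D h gf m SS x0"
    have OS: "set_pmf Ou \<subseteq> {xs. length xs = T}" "finite (set_pmf Ou)"
      using S.outer_set[OF True, of SS] SSm unfolding Ou_def by auto
    have Tne: "{..<T} \<noteq> {}" using T_pos by auto
    have "measure_pmf.expectation (prox_svrg n D h gf x0 T m b \<eta>) (\<lambda>x. (norm (grad_map \<eta> D h n gf x))\<^sup>2)
        = measure_pmf.expectation Ou (\<lambda>xs. measure_pmf.expectation (map_pmf (\<lambda>j. xs ! j) (pmf_of_set {..<T})) (\<lambda>x. (norm (grad_map \<eta> D h n gf x))\<^sup>2))"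
      unfolding prox_svrg_def Let_def SS_def[symmetric] Ou_def[symmetric] SSm
      by (rule Ebind) (use OS Tne in auto)
    also have "\<dots> = measure_pmf.expectation Ou (\<lambda>xs. (18 * L / real T) * sum_list (map S.Gm xs))"
    proof (rule Econg)
      fix xs assume xs: "xs \<in> set_pmf Ou"
      then have len: "length xs = T" using OS by auto
      have "measure_pmf.expectation (map_pmf (\<lambda>j. xs ! j) (pmf_of_set {..<T})) (\<lambda>x. (norm (grad_map \<eta> D h n gf x))\<^sup>2)
          = (\<Sum>j<T. (norm (grad_map \<eta> D h n gf (xs ! j)))\<^sup>2) / real T"
        using Tne by (simp add: integral_pmf_of_set)
      also have "\<dots> = (\<Sum>j<T. 18 * L * S.Gm (xs ! j)) / real T"
        using L_pos by (simp add: S.Gm_def)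
      also have "\<dots> = (18 * L / real T) * (\<Sum>j<T. S.Gm (xs ! j))"
        by (simp add: sum_distrib_left[symmetric])
      also have "(\<Sum>j<T. S.Gm (xs ! j)) = sum_list (map S.Gm xs)"
        using len by (simp add: sum_list_sum_nth atLeast0LessThan)
      finally show "measure_pmf.expectation (map_pmf (\<lambda>j. xs ! j) (pmf_of_set {..<T})) (\<lambda>x. (norm (grad_map \<eta> D h n gf x))\<^sup>2)
          = (18 * L / real T) * sum_list (map S.Gm xs)" .
    qed
    also have "\<dots> = (18 * L / real T) * measure_pmf.expectation Ou (\<lambda>xs. sum_list (map S.Gm xs))"
      by simp
    also have "\<dots> \<le> (18 * L / real T) * (S.F x0 - Fs)"
      using S.outer_bound[OF True c0 cS cL cnn Fs, of SS] L_pos T_pos unfolding Ou_def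
      by (intro mult_left_mono) auto
    finally have main: "measure_pmf.expectation (prox_svrg n D h gf x0 T m b \<eta>) (\<lambda>x. (norm (grad_map \<eta> D h n gf x))\<^sup>2)
       \<le> (18 * L / real T) * (S.F x0 - Fs)" .
    have "F_ext D (\<lambda>x. (\<Sum>i<n. fs i x) / real n) h x0 = ereal (S.F x0)"
      using True by (simp add: F_ext_def S.F_def S.f_def)
    then have "ereal (18 * L) * (F_ext D (\<lambda>x. (\<Sum>i<n. fs i x) / real n) h x0
                             - ereal ((\<Sum>i<n. fs i xstar) / real n + h xstar)) / ereal (real T)
         = ereal ((18 * L / real T) * (S.F x0 - Fs))"
      using T_pos by (simp add: Fs_def divide_ereal_def divide_inverse)
    then show ?thesis using main by simp
  qed
qed


end
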